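(* Let $\Gamma$ be a weighted digraph with vertex set $\{1,\dots,n\}$, $n>1$, without loops and with strictly positive arc weights, with Laplacian matrix $L$, matrices of in-forests $Q_k$ and in-forest weights $\sigma_k$. Then for every $k=0,1,2,\dots$, $$Q_k=\sum_{i=0}^{k}\sigma_{k-i}(-L)^i.$$
   Context: $W=(w_{ij})$ is the matrix of arc weights ($w_{ij}>0$ iff there is an arc $i\to j$, else $0$). The Laplacian $L=(\ell_{ij})$: $\ell_{ij}=-w_{ij}$ for $j\ne i$, $\ell_{ii}=\sum_{k\ne i}w_{ik}$. The weight of a subgraph is the product of its arc weights (1 if no arcs); the weight of a set of subgraphs is the sum of their weights (0 for the empty set). A converging tree is a weakly connected digraph with one vertex (the root) of outdegree 0 and all others of outdegree 1; an in-forest is a spanning subgraph of $\Gamma$ whose weak components are converging trees. $\sigma_k$ is the total weight of in-forests of $\Gamma$ with $k$ arcs ($\sigma_0=1$). $Q_k=(q^k_{ij})$ where $q^k_{ij}$ is the total weight of in-forests with $k$ arcs in which $i$ lies in a tree rooted at $j$ ($Q_0=I$). *)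

theory Defs
  imports "HOL-Analysis.Analysis"
begin

text \<open>Vertices are the elements of a finite type 'n (n = CARD('n)); a weighted digraph
  is given by its weight matrix W, with an arc i -> j iff W i j > 0.\<close>

definition arcs :: "real^'n^'n \<Rightarrow> ('n \<times> 'n) set" where
  "arcs W = {(i,j). W$i$j > 0}"

definition laplacian :: "real^'n^'n \<Rightarrow> real^'n^'n" where
  "laplacian W = (\<chi> i j. if i = j then (\<Sum>k\<in>UNIV-{i}. W$i$k) else - W$i$j)"

primrec matpow :: "real^'n^'n \<Rightarrow> nat \<Rightarrow> real^'n^'n" where
  "matpow A 0 = mat 1"
| "matpow A (Suc m) = matpow A m ** A"

definition outdeg :: "('n \<times> 'n) set \<Rightarrow> 'n \<Rightarrow> nat" where
  "outdeg F v = card {x. (v,x) \<in> F}"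

definition wcomp :: "('n \<times> 'n) set \<Rightarrow> 'n \<Rightarrow> 'n set" where
  "wcomp F v = {u. (v,u) \<in> (F \<union> F\<inverse>)\<^sup>*}"

definition converging_tree :: "('n \<times> 'n) set \<Rightarrow> 'n set \<Rightarrow> bool" where
  "converging_tree F C \<longleftrightarrow> (\<exists>r\<in>C. outdeg F r = 0 \<and> (\<forall>v\<in>C-{r}. outdeg F v = 1))"

definition in_forest :: "real^'n^'n \<Rightarrow> ('n \<times> 'n) set \<Rightarrow> bool" where
  "in_forest W F \<longleftrightarrow> F \<subseteq> arcs W \<and> (\<forall>v. converging_tree F (wcomp F v))"

definition tree_root :: "('n \<times> 'n) set \<Rightarrow> 'n \<Rightarrow> 'n \<Rightarrow> bool" where
  "tree_root F i j \<longleftrightarrow> j \<in> wcomp F i \<and> outdeg F j = 0"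

definition weight :: "real^'n^'n \<Rightarrow> ('n \<times> 'n) set \<Rightarrow> real" where
  "weight W F = (\<Prod>(i,j)\<in>F. W$i$j)"

definition sigma :: "real^'n^'n \<Rightarrow> nat \<Rightarrow> real" where
  "sigma W k = (\<Sum>F\<in>{F. in_forest W F \<and> card F = k}. weight W F)"

definition Qmat :: "real^'n^'n \<Rightarrow> nat \<Rightarrow> real^'n^'n" where
  "Qmat W k = (\<chi> i j. \<Sum>F\<in>{F. in_forest W F \<and> card F = k \<and> tree_root F i j}. weight W F)"

end

theory Submission
  imports Defs
begin
definition func :: "('n \<times> 'n) set \<Rightarrow> bool" where
  "func F \<longleftrightarrow> (\<forall>v x y. (v,x)\<in>F \<longrightarrow> (v,y)\<in>F \<longrightarrow> x = y)"
definition sink :: "('n \<times> 'n) set \<Rightarrow> 'n \<Rightarrow> bool" where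
  "sink F v \<longleftrightarrow> (\<forall>x. (v,x) \<notin> F)"
definition rooted :: "('n \<times> 'n) set \<Rightarrow> 'n \<Rightarrow> 'n \<Rightarrow> bool" where
  "rooted F v j \<longleftrightarrow> (v,j) \<in> F\<^sup>* \<and> sink F j"

lemma sink_rtrancl: "sink F a \<Longrightarrow> (a,b) \<in> F\<^sup>* \<Longrightarrow> b = a"
  by (metis converse_rtranclE sink_def)

lemma rooted_step:
  assumes "func F" "rooted F u r" "(u,w) \<in> F" shows "rooted F w r"
proof -
  have "(u,r) \<in> F\<^sup>*" "sink F r" using assms(2) unfolding rooted_def by auto
  moreover have "u \<noteq> r" using assms(3) \<open>sink F r\<close> unfolding sink_def by auto
  ultimately have "(u,r) \<in> F\<^sup>+" by (simp add: rtrancl_eq_or_trancl)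
  then obtain y where "(u,y) \<in> F" "(y,r) \<in> F\<^sup>*" by (meson tranclD)
  then have "y = w" using assms(1,3) func_def by metis
  then show ?thesis using \<open>(y,r) \<in> F\<^sup>*\<close> \<open>sink F r\<close> unfolding rooted_def by auto
qed

lemma rooted_wcomp:
  assumes "func F" "rooted F v r" "(v,u) \<in> (F \<union> F\<inverse>)\<^sup>*" shows "rooted F u r"
  using assms(3)
proof (induction rule: rtrancl_induct)
  case base then show ?case using assms(2) .
next
  case (step u w)
  show ?case
  proof (cases "(u,w) \<in> F")
    case True then show ?thesis using rooted_step[OF assms(1) step.IH] by blast
  next
    case False
    then have "(w,u) \<in> F" using step.hyps(2) by auto
    then show ?thesis using step.IH unfolding rooted_def
      by (meson converse_rtrancl_into_rtrancl)
  qed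
qed

lemma rooted_unique:
  assumes "func F" "rooted F v a" "rooted F v b" shows "a = b"
proof -
  have "(v,b) \<in> (F \<union> F\<inverse>)\<^sup>*" using assms(3) unfolding rooted_def
    by (meson in_rtrancl_UnI)
  then have "rooted F b a" by (rule rooted_wcomp[OF assms(1,2)])
  then show ?thesis using assms(3) sink_rtrancl unfolding rooted_def by metis
qed

lemma rooted_exists:
  assumes "acyclic (F::('n::finite \<times> 'n) set)" shows "\<exists>r. rooted F v r"
proof -
  have "wf (F\<inverse>)" using assms by (simp add: finite_acyclic_wf_converse)
  then show ?thesis
  proof (induction v rule: wf_induct_rule)
    case (less v)
    show ?case
    proof (cases "sink F v")
      case True then show ?thesis unfolding rooted_def by auto
    next
      case False
      then obtain x where "(v,x) \<in> F" unfolding sink_def by auto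
      then obtain r where "rooted F x r" using less by auto
      then show ?thesis using \<open>(v,x) \<in> F\<close> unfolding rooted_def
        by (meson converse_rtrancl_into_rtrancl)
    qed
  qed
qed

definition forest :: "real^'n^'n \<Rightarrow> ('n \<times> 'n) set \<Rightarrow> bool" where
  "forest W F \<longleftrightarrow> F \<subseteq> arcs W \<and> func F \<and> acyclic F"

lemma outdeg0: "outdeg F v = 0 \<longleftrightarrow> sink (F::('n::finite \<times> 'n) set) v"
  unfolding outdeg_def sink_def by auto

lemma outdeg_le1_func:
  assumes "\<And>v. outdeg (F::('n::finite \<times> 'n) set) v \<le> 1" shows "func F"
  unfolding func_def
proof (intro allI impI)
  fix v x y assume "(v,x) \<in> F" "(v,y) \<in> F"
  then have "{x,y} \<subseteq> {x. (v,x) \<in> F}" by auto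
  then have "card {x,y} \<le> outdeg F v" unfolding outdeg_def by (intro card_mono) auto
  then show "x = y" using assms[of v] by (cases "x = y") auto
qed

lemma in_forest_forest:
  assumes "in_forest W F" shows "forest W F"
proof -
  have sub: "F \<subseteq> arcs W" using assms in_forest_def by auto
  have "outdeg F v \<le> 1" for v
  proof -
    have "v \<in> wcomp F v" unfolding wcomp_def by auto
    moreover have "converging_tree F (wcomp F v)" using assms in_forest_def by auto
    ultimately show ?thesis unfolding converging_tree_def by (metis Diff_iff le_refl singletonD zero_le)
  qed
  then have fu: "func F" by (rule outdeg_le1_func)
  have "acyclic F"
    unfolding acyclic_def
  proof (intro allI notI)
    fix c assume cyc: "(c,c) \<in> F\<^sup>+"
    obtain r where r: "r \<in> wcomp F c" "outdeg F r = 0"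
      using assms in_forest_def converging_tree_def by metis
    have "(u,c) \<in> F\<^sup>*" if "(c,u) \<in> (F \<union> F\<inverse>)\<^sup>*" for u
      using that
    proof (induction rule: rtrancl_induct)
      case base then show ?case by simp
    next
      case (step u w)
      show ?case
      proof (cases "(u,w) \<in> F")
        case True
        have "(u,c) \<in> F\<^sup>+"
          using step.IH cyc by (metis rtrancl_eq_or_trancl)
        then obtain y where "(u,y) \<in> F" "(y,c) \<in> F\<^sup>*" by (meson tranclD)
        then show ?thesis using True fu func_def by metis
      next
        case False
        then have "(w,u) \<in> F" using step.hyps(2) by auto
        then show ?thesis using step.IH by (meson converse_rtrancl_into_rtrancl)
      qed
    qed
    then have "(r,c) \<in> F\<^sup>*" using r(1) unfolding wcomp_def by auto
    then have "c = r" using r(2) outdeg0 sink_rtrancl by metis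
    then show False using cyc r(2) outdeg0 sink_def by (metis tranclD)
  qed
  then show ?thesis using sub fu forest_def by auto
qed

lemma forest_in_forest:
  assumes "forest W (F::('n::finite \<times> 'n) set)" shows "in_forest W F"
  unfolding in_forest_def
proof (intro conjI allI)
  show "F \<subseteq> arcs W" using assms forest_def by auto
  fix v
  have fu: "func F" using assms forest_def by auto
  obtain r where r: "rooted F v r" using rooted_exists assms forest_def by blast
  have "r \<in> wcomp F v" using r unfolding wcomp_def rooted_def by (simp add: in_rtrancl_UnI)
  moreover have "outdeg F r = 0" using r unfolding rooted_def by (simp add: outdeg0)
  moreover have "outdeg F u = 1" if "u \<in> wcomp F v - {r}" for u
  proof -
    have "rooted F u r" using rooted_wcomp[OF fu r] that unfolding wcomp_def by auto
    then have "\<not> sink F u" using that sink_rtrancl unfolding rooted_def by fastforce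
    then have "outdeg F u \<noteq> 0" using outdeg0 by auto
    moreover have "outdeg F u \<le> 1"
    proof -
      obtain x where "(u,x) \<in> F" using \<open>\<not> sink F u\<close> unfolding sink_def by auto
      then have "{x. (u,x) \<in> F} = {x}" using fu unfolding func_def by auto
      then show ?thesis unfolding outdeg_def by simp
    qed
    ultimately show ?thesis by linarith
  qed
  ultimately show "converging_tree F (wcomp F v)" unfolding converging_tree_def by blast
qed

lemma in_forest_iff: "in_forest W (F::('n::finite \<times> 'n) set) \<longleftrightarrow> forest W F"
  using in_forest_forest forest_in_forest by blast

lemma tree_root_iff:
  assumes "forest W F" shows "tree_root F i j \<longleftrightarrow> rooted F i j"
proof
  assume a: "rooted F i j"
  then have "(i,j) \<in> (F \<union> F\<inverse>)\<^sup>*" unfolding rooted_def by (meson in_rtrancl_UnI)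
  moreover have "outdeg F j = 0" using a unfolding rooted_def by (simp add: outdeg0)
  ultimately show "tree_root F i j" unfolding tree_root_def wcomp_def by simp
next
  assume t: "tree_root F i j"
  have fu: "func F" using assms forest_def by auto
  obtain r where r: "rooted F i r" using rooted_exists assms forest_def by blast
  have "rooted F j r" using rooted_wcomp[OF fu r] t unfolding tree_root_def wcomp_def by auto
  then have "j = r" using t tree_root_def outdeg0 sink_rtrancl rooted_def by metis
  then show "rooted F i j" using r by simp
qed


lemma forest_insert:
  assumes "forest W H" "sink H i" "(m,i) \<notin> H\<^sup>*" "W$i$m > 0"
  shows "forest W (insert (i,m) H)"
proof -
  have "acyclic (insert (i,m) H)" using assms(1,3) unfolding forest_def by simp
  moreover have "func (insert (i,m) H)" using assms(1,2) unfolding forest_def func_def sink_def by blast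
  moreover have "insert (i,m) H \<subseteq> arcs W" using assms(1,4) unfolding forest_def arcs_def by auto
  ultimately show ?thesis unfolding forest_def by blast
qed

lemma rooted_insert:
  assumes "func H" "sink H i" "(m,i) \<notin> H\<^sup>*"
  shows "rooted (insert (i,m) H) v j \<longleftrightarrow> (if (v,i) \<in> H\<^sup>* then rooted H m j else rooted H v j)"
proof -
  have st: "(v,j) \<in> (insert (i,m) H)\<^sup>* \<longleftrightarrow> (v,j) \<in> H\<^sup>* \<or> ((v,i) \<in> H\<^sup>* \<and> (m,j) \<in> H\<^sup>*)"
    by (simp add: rtrancl_insert)
  have sk: "sink (insert (i,m) H) x \<longleftrightarrow> sink H x \<and> x \<noteq> i" for x
    unfolding sink_def by auto
  show ?thesis
  proof (cases "(v,i) \<in> H\<^sup>*")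
    case True
    have ri: "rooted H v i" using True assms(2) unfolding rooted_def by simp
    have "rooted (insert (i,m) H) v j \<longleftrightarrow> rooted H m j"
    proof
      assume a: "rooted (insert (i,m) H) v j"
      then have "sink H j" "j \<noteq> i" using sk unfolding rooted_def by auto
      moreover have "(v,j) \<in> H\<^sup>* \<or> (m,j) \<in> H\<^sup>*" using a st unfolding rooted_def by auto
      moreover have "(v,j) \<notin> H\<^sup>*"
      proof
        assume "(v,j) \<in> H\<^sup>*"
        then have "rooted H v j" using \<open>sink H j\<close> unfolding rooted_def by simp
        then show False using rooted_unique[OF assms(1) ri] \<open>j \<noteq> i\<close> by blast
      qed
      ultimately show "rooted H m j" unfolding rooted_def by auto
    next
      assume a: "rooted H m j"
      then have "j \<noteq> i" using assms(3) unfolding rooted_def by auto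
      then show "rooted (insert (i,m) H) v j" using a True st sk unfolding rooted_def by auto
    qed
    then show ?thesis using True by simp
  next
    case False
    have "j \<noteq> i" if "(v,j) \<in> H\<^sup>*" using that False by auto
    then show ?thesis using False st sk unfolding rooted_def by auto
  qed
qed

lemma forest_remove:
  assumes "forest W F" "(i,m) \<in> F"
  shows "forest W (F - {(i,m)})" "sink (F - {(i,m)}) i" "(m,i) \<notin> (F - {(i,m)})\<^sup>*" "W$i$m > 0"
proof -
  show "forest W (F - {(i,m)})" using assms unfolding forest_def func_def
    by (meson Diff_subset acyclic_subset subset_trans DiffD1)
  show "sink (F - {(i,m)}) i" using assms unfolding forest_def func_def sink_def by blast
  show "W$i$m > 0" using assms unfolding forest_def arcs_def by auto
  show "(m,i) \<notin> (F - {(i,m)})\<^sup>*"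
  proof
    assume "(m,i) \<in> (F - {(i,m)})\<^sup>*"
    then have "(m,i) \<in> F\<^sup>*" by (meson Diff_subset rtrancl_mono subsetD)
    then have "(i,i) \<in> F\<^sup>+" using assms(2) by (meson rtrancl_into_trancl2)
    then show False using assms(1) unfolding forest_def acyclic_def by blast
  qed
qed

definition Fs :: "real^'n^'n \<Rightarrow> nat \<Rightarrow> ('n \<times> 'n) set set" where
  "Fs W k = {F. forest W F \<and> card F = k}"

lemma finite_sets [simp]: "finite (A :: ('n::finite \<times> 'n) set set)"
  by simp

lemma sum_decomp:
  fixes W :: "real^'n^'n"
  shows "(\<Sum>F\<in>{F\<in>Fs W (Suc k). \<not> sink F i}. f F)
       = (\<Sum>H\<in>{H\<in>Fs W k. sink H i}. \<Sum>m\<in>{m. 0 < W$i$m \<and> (m,i) \<notin> H\<^sup>*}. f (insert (i,m) H))"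
proof -
  define T where "T = (SIGMA H:{H\<in>Fs W k. sink H i}. {m. 0 < W$i$m \<and> (m,i) \<notin> H\<^sup>*})"
  have "(\<Sum>H\<in>{H\<in>Fs W k. sink H i}. \<Sum>m\<in>{m. 0 < W$i$m \<and> (m,i) \<notin> H\<^sup>*}. f (insert (i,m) H))
     = (\<Sum>(H,m)\<in>T. f (insert (i,m) H))"
    unfolding T_def by (rule sum.Sigma) auto
  also have "\<dots> = (\<Sum>F\<in>{F\<in>Fs W (Suc k). \<not> sink F i}. f F)"
  proof (rule sym, rule sum.reindex_bij_witness[where i="\<lambda>(H,m). insert (i,m) H"
        and j="\<lambda>F. (F - {(i, SOME m. (i,m) \<in> F)}, SOME m. (i,m) \<in> F)"])
    fix F assume "F \<in> {F\<in>Fs W (Suc k). \<not> sink F i}"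
    then have F: "forest W F" "card F = Suc k" "\<not> sink F i" unfolding Fs_def by auto
    define m where "m = (SOME m. (i,m) \<in> F)"
    have im: "(i,m) \<in> F" using F(3) unfolding m_def sink_def by (meson someI)
    note R = forest_remove[OF F(1) im]
    show "(case (F - {(i, SOME m. (i,m) \<in> F)}, SOME m. (i,m) \<in> F) of (H,m) \<Rightarrow> insert (i,m) H) = F"
      using im unfolding m_def[symmetric] by auto
    have "card (F - {(i,m)}) = k" using F(2) im by simp
    then show "(F - {(i, SOME m. (i,m) \<in> F)}, SOME m. (i,m) \<in> F) \<in> T"
      unfolding m_def[symmetric] T_def Fs_def using R by auto
    show "(case (F - {(i, SOME m. (i,m) \<in> F)}, SOME m. (i,m) \<in> F) of (H,m) \<Rightarrow> f (insert (i,m) H)) = f F"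
      using im unfolding m_def[symmetric] by (simp add: insert_absorb)
  next
    fix b assume "b \<in> T"
    then obtain H m where b: "b = (H,m)" "forest W H" "card H = k" "sink H i" "0 < W$i$m" "(m,i) \<notin> H\<^sup>*"
      unfolding T_def Fs_def by auto
    have nim: "(i,m) \<notin> H" using b(4) unfolding sink_def by auto
    have fu: "func (insert (i,m) H)" using forest_insert[OF b(2,4,6,5)] unfolding forest_def by auto
    have sm: "(SOME x. (i,x) \<in> insert (i,m) H) = m"
    proof (rule some_equality)
      show "(i,m) \<in> insert (i,m) H" by simp
      fix x assume "(i,x) \<in> insert (i,m) H" then show "x = m" using fu unfolding func_def by blast
    qed
    show "(case b of (H,m) \<Rightarrow> insert (i,m) H) \<in> {F\<in>Fs W (Suc k). \<not> sink F i}"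
      using b forest_insert[OF b(2,4,6,5)] nim unfolding Fs_def sink_def by auto
    show "(\<lambda>F. (F - {(i, SOME m. (i,m) \<in> F)}, SOME m. (i,m) \<in> F)) (case b of (H,m) \<Rightarrow> insert (i,m) H) = b"
      using b(1) sm nim by auto
  qed
  finally show ?thesis by simp
qed


definition rr :: "('n \<times> 'n) set \<Rightarrow> 'n \<Rightarrow> 'n \<Rightarrow> real" where
  "rr F v j = (if rooted F v j then 1 else 0)"

definition qq :: "real^'n^'n \<Rightarrow> nat \<Rightarrow> 'n \<Rightarrow> 'n \<Rightarrow> real" where
  "qq W k v j = (\<Sum>F\<in>Fs W k. weight W F * rr F v j)"

definition sig :: "real^'n^'n \<Rightarrow> nat \<Rightarrow> real" where
  "sig W k = (\<Sum>F\<in>Fs W k. weight W F)"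

lemma weight_insert:
  assumes "(i,m) \<notin> (H::('n::finite \<times> 'n) set)"
  shows "weight W (insert (i,m) H) = W$i$m * weight W H"
  unfolding weight_def using assms by (simp add: prod.insert)

lemma sum_split:
  assumes "finite A"
  shows "sum f A = sum f {x\<in>A. P x} + sum f {x\<in>A. \<not> P x}"
proof -
  have "A = {x\<in>A. P x} \<union> {x\<in>A. \<not> P x}" by auto
  then have "sum f A = sum f ({x\<in>A. P x} \<union> {x\<in>A. \<not> P x})" by simp
  also have "\<dots> = sum f {x\<in>A. P x} + sum f {x\<in>A. \<not> P x}"
    using assms by (intro sum.union_disjoint) auto
  finally show ?thesis .
qed

lemma antisym_sum:
  fixes c x :: "'a \<Rightarrow> real"
  shows "(\<Sum>a\<in>N. c a * (\<Sum>b\<in>N. c b * (x a - x b))) = 0"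
proof -
  have "(\<Sum>a\<in>N. c a * (\<Sum>b\<in>N. c b * (x a - x b)))
      = (\<Sum>a\<in>N. \<Sum>b\<in>N. c a * c b * x a) - (\<Sum>a\<in>N. \<Sum>b\<in>N. c a * c b * x b)"
    by (simp add: sum_distrib_left sum_subtractf[symmetric] algebra_simps)
  also have "(\<Sum>a\<in>N. \<Sum>b\<in>N. c a * c b * x b) = (\<Sum>b\<in>N. \<Sum>a\<in>N. c a * c b * x b)"
    by (rule sum.swap)
  also have "\<dots> = (\<Sum>a\<in>N. \<Sum>b\<in>N. c a * c b * x a)"
    by (simp add: mult.commute)
  finally show ?thesis by simp
qed

lemma rr_sink:
  assumes "sink H i" shows "rr H i j = (if i = j then 1 else 0)"
  using assms sink_rtrancl unfolding rr_def rooted_def by fastforce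

lemma rr_below:
  assumes "func H" "sink H i" "(m,i) \<in> H\<^sup>*" shows "rr H m j = (if i = j then 1 else 0)"
proof -
  have ri: "rooted H m i" using assms unfolding rooted_def by simp
  have "rooted H m j \<longleftrightarrow> j = i" using rooted_unique[OF assms(1) ri] ri by blast
  then show ?thesis unfolding rr_def by auto
qed

lemma main_step:
  fixes W :: "real^'n^'n"
  assumes Wnn: "\<forall>i j. W$i$j \<ge> 0"
  shows "qq W (Suc k) i j + (\<Sum>m\<in>UNIV. W$i$m * (qq W k i j - qq W k m j))
       = (if i = j then sig W (Suc k) else 0)"
proof -
  define d :: real where "d = (if i = j then 1 else 0)"
  define N' where "N' H = {m. 0 < W$i$m \<and> (m,i) \<notin> H\<^sup>*}" for H :: "('n \<times> 'n) set"
  define h where "h F = (\<Sum>m\<in>UNIV. W$i$m * (rr F i j - rr F m j))" for F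
  have W0: "W$i$m = 0" if "\<not> 0 < W$i$m" for m using Wnn[rule_format, of i m] that by linarith
  have X: "(\<Sum>m\<in>UNIV. W$i$m * (qq W k i j - qq W k m j)) = (\<Sum>F\<in>Fs W k. weight W F * h F)"
  proof -
    have "(\<Sum>m\<in>UNIV. W$i$m * (qq W k i j - qq W k m j))
        = (\<Sum>m\<in>UNIV. \<Sum>F\<in>Fs W k. W$i$m * (weight W F * (rr F i j - rr F m j)))"
      unfolding qq_def by (simp add: sum_subtractf[symmetric] sum_distrib_left right_diff_distrib)
    also have "\<dots> = (\<Sum>F\<in>Fs W k. \<Sum>m\<in>UNIV. W$i$m * (weight W F * (rr F i j - rr F m j)))"
      by (rule sum.swap)
    also have "\<dots> = (\<Sum>F\<in>Fs W k. weight W F * h F)"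
      unfolding h_def by (simp add: sum_distrib_left algebra_simps)
    finally show ?thesis .
  qed
  have NS: "(\<Sum>F\<in>{F\<in>Fs W k. \<not> sink F i}. weight W F * h F) = 0"
  proof (cases k)
    case 0
    have "{F\<in>Fs W k. \<not> sink F i} = {}"
    proof -
      have "F = {}" if "F \<in> Fs W 0" for F :: "('n \<times> 'n) set"
        using that unfolding Fs_def by auto
      then show ?thesis using 0 unfolding sink_def by auto
    qed
    then show ?thesis by (simp only: sum.empty)
  next
    case (Suc k')
    have inner: "(\<Sum>m'\<in>N' H. weight W (insert (i,m') H) * h (insert (i,m') H)) = 0"
      if H: "H \<in> {H\<in>Fs W k'. sink H i}" for H
    proof -
      have fH: "forest W H" "sink H i" using H unfolding Fs_def by auto
      then have fu: "func H" unfolding forest_def by auto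
      define N where "N = {m. (m,i) \<notin> H\<^sup>*}"
      define x where "x m = rr H m j" for m
      have tm: "weight W (insert (i,m') H) * h (insert (i,m') H)
          = weight W H * (W$i$m' * (\<Sum>m\<in>N. W$i$m * (x m' - x m)))" if m': "m' \<in> N' H" for m'
      proof -
        have nm: "(m',i) \<notin> H\<^sup>*" using m' unfolding N'_def by auto
        have nim: "(i,m') \<notin> H" using fH(2) unfolding sink_def by auto
        have r1: "rr (insert (i,m') H) i j = x m'"
          unfolding rr_def x_def using rooted_insert[OF fu fH(2) nm] by simp
        have r2: "rr (insert (i,m') H) m j = (if (m,i) \<in> H\<^sup>* then x m' else x m)" for m
          unfolding rr_def x_def using rooted_insert[OF fu fH(2) nm] by simp
        have "h (insert (i,m') H) = (\<Sum>m\<in>UNIV. if m \<in> N then W$i$m * (x m' - x m) else 0)"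
          unfolding h_def r1 r2 N_def by (intro sum.cong) auto
        also have "\<dots> = (\<Sum>m\<in>N. W$i$m * (x m' - x m))"
          by (simp add: sum.inter_filter[symmetric])
        finally show ?thesis using weight_insert[OF nim] by simp
      qed
      have "(\<Sum>m'\<in>N' H. weight W (insert (i,m') H) * h (insert (i,m') H))
          = weight W H * (\<Sum>m'\<in>N' H. W$i$m' * (\<Sum>m\<in>N. W$i$m * (x m' - x m)))"
        using tm by (simp add: sum_distrib_left)
      also have "(\<Sum>m'\<in>N' H. W$i$m' * (\<Sum>m\<in>N. W$i$m * (x m' - x m)))
          = (\<Sum>m'\<in>N. W$i$m' * (\<Sum>m\<in>N. W$i$m * (x m' - x m)))"
        by (rule sum.mono_neutral_left) (auto simp: N'_def N_def W0)
      also have "\<dots> = 0" by (rule antisym_sum)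
      finally show ?thesis by simp
    qed
    have "(\<Sum>F\<in>{F\<in>Fs W k. \<not> sink F i}. weight W F * h F)
        = (\<Sum>H\<in>{H\<in>Fs W k'. sink H i}. \<Sum>m'\<in>N' H. weight W (insert (i,m') H) * h (insert (i,m') H))"
      unfolding Suc N'_def by (rule sum_decomp)
    also have "\<dots> = 0" using inner by simp
    finally show ?thesis .
  qed
  have S: "(\<Sum>F\<in>{F\<in>Fs W k. sink F i}. weight W F * h F)
         = (\<Sum>G\<in>{G\<in>Fs W (Suc k). \<not> sink G i}. weight W G * (d - rr G i j))"
  proof -
    have per: "weight W H * h H = (\<Sum>m\<in>N' H. weight W (insert (i,m) H) * (d - rr (insert (i,m) H) i j))"
      if H: "H \<in> {H\<in>Fs W k. sink H i}" for H
    proof -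
      have fH: "forest W H" "sink H i" using H unfolding Fs_def by auto
      then have fu: "func H" unfolding forest_def by auto
      have "h H = (\<Sum>m\<in>UNIV. W$i$m * (d - rr H m j))"
        unfolding h_def d_def using rr_sink[OF fH(2)] by simp
      also have "\<dots> = (\<Sum>m\<in>N' H. W$i$m * (d - rr H m j))"
      proof (rule sum.mono_neutral_right)
        show "\<forall>m\<in>UNIV - N' H. W$i$m * (d - rr H m j) = 0"
        proof
          fix m assume "m \<in> UNIV - N' H"
          then have "\<not> 0 < W$i$m \<or> (m,i) \<in> H\<^sup>*" unfolding N'_def by auto
          then show "W$i$m * (d - rr H m j) = 0"
            using W0 rr_below[OF fu fH(2)] d_def by auto
        qed
      qed auto
      also have "\<dots> = (\<Sum>m\<in>N' H. W$i$m * (d - rr (insert (i,m) H) i j))"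
      proof (rule sum.cong)
        fix m assume "m \<in> N' H"
        then have nm: "(m,i) \<notin> H\<^sup>*" unfolding N'_def by auto
        have "rr (insert (i,m) H) i j = rr H m j"
          unfolding rr_def using rooted_insert[OF fu fH(2) nm] by simp
        then show "W$i$m * (d - rr H m j) = W$i$m * (d - rr (insert (i,m) H) i j)" by simp
      qed simp
      finally have "weight W H * h H = (\<Sum>m\<in>N' H. weight W H * (W$i$m * (d - rr (insert (i,m) H) i j)))"
        by (simp add: sum_distrib_left)
      also have "\<dots> = (\<Sum>m\<in>N' H. weight W (insert (i,m) H) * (d - rr (insert (i,m) H) i j))"
      proof (rule sum.cong)
        fix m
        have nim: "(i,m) \<notin> H" using fH(2) unfolding sink_def by auto
        show "weight W H * (W$i$m * (d - rr (insert (i,m) H) i j)) = weight W (insert (i,m) H) * (d - rr (insert (i,m) H) i j)"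
          using weight_insert[OF nim] by simp
      qed simp
      finally show ?thesis .
    qed
    have "(\<Sum>G\<in>{G\<in>Fs W (Suc k). \<not> sink G i}. weight W G * (d - rr G i j))
        = (\<Sum>H\<in>{H\<in>Fs W k. sink H i}. \<Sum>m\<in>N' H. weight W (insert (i,m) H) * (d - rr (insert (i,m) H) i j))"
      unfolding N'_def by (rule sum_decomp)
    also have "\<dots> = (\<Sum>F\<in>{F\<in>Fs W k. sink F i}. weight W F * h F)"
      using per by simp
    finally show ?thesis by simp
  qed
  have Q: "qq W (Suc k) i j = (\<Sum>G\<in>{G\<in>Fs W (Suc k). sink G i}. weight W G * d)
         + (\<Sum>G\<in>{G\<in>Fs W (Suc k). \<not> sink G i}. weight W G * rr G i j)"
  proof -
    have "qq W (Suc k) i j = (\<Sum>G\<in>{G\<in>Fs W (Suc k). sink G i}. weight W G * rr G i j)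
         + (\<Sum>G\<in>{G\<in>Fs W (Suc k). \<not> sink G i}. weight W G * rr G i j)"
      unfolding qq_def by (rule sum_split) simp
    moreover have "(\<Sum>G\<in>{G\<in>Fs W (Suc k). sink G i}. weight W G * rr G i j)
        = (\<Sum>G\<in>{G\<in>Fs W (Suc k). sink G i}. weight W G * d)"
      by (rule sum.cong) (auto simp: rr_sink d_def)
    ultimately show ?thesis by simp
  qed
  have sg: "sig W (Suc k) = (\<Sum>G\<in>{G\<in>Fs W (Suc k). sink G i}. weight W G)
         + (\<Sum>G\<in>{G\<in>Fs W (Suc k). \<not> sink G i}. weight W G)"
    unfolding sig_def by (rule sum_split) simp
  have "(\<Sum>F\<in>Fs W k. weight W F * h F) = (\<Sum>F\<in>{F\<in>Fs W k. sink F i}. weight W F * h F)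
         + (\<Sum>F\<in>{F\<in>Fs W k. \<not> sink F i}. weight W F * h F)"
    by (rule sum_split) simp
  then have "qq W (Suc k) i j + (\<Sum>m\<in>UNIV. W$i$m * (qq W k i j - qq W k m j))
      = (\<Sum>G\<in>{G\<in>Fs W (Suc k). sink G i}. weight W G * d)
         + (\<Sum>G\<in>{G\<in>Fs W (Suc k). \<not> sink G i}. weight W G * rr G i j)
         + (\<Sum>G\<in>{G\<in>Fs W (Suc k). \<not> sink G i}. weight W G * (d - rr G i j))"
    using X NS S Q by simp
  also have "\<dots> = d * sig W (Suc k)"
  proof -
    have "(\<Sum>G\<in>{G\<in>Fs W (Suc k). \<not> sink G i}. weight W G * rr G i j)
        + (\<Sum>G\<in>{G\<in>Fs W (Suc k). \<not> sink G i}. weight W G * (d - rr G i j))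
        = (\<Sum>G\<in>{G\<in>Fs W (Suc k). \<not> sink G i}. weight W G * rr G i j + weight W G * (d - rr G i j))"
      by (rule sum.distrib[symmetric])
    also have "\<dots> = (\<Sum>G\<in>{G\<in>Fs W (Suc k). \<not> sink G i}. weight W G * d)"
      by (rule sum.cong) (auto simp: algebra_simps)
    finally have e: "(\<Sum>G\<in>{G\<in>Fs W (Suc k). \<not> sink G i}. weight W G * rr G i j)
        + (\<Sum>G\<in>{G\<in>Fs W (Suc k). \<not> sink G i}. weight W G * (d - rr G i j))
        = (\<Sum>G\<in>{G\<in>Fs W (Suc k). \<not> sink G i}. weight W G) * d"
      by (simp add: sum_distrib_right)
    have e2: "(\<Sum>G\<in>{G\<in>Fs W (Suc k). sink G i}. weight W G * d) = (\<Sum>G\<in>{G\<in>Fs W (Suc k). sink G i}. weight W G) * d"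
      by (simp add: sum_distrib_right)
    show ?thesis unfolding sg using e e2 by (simp add: algebra_simps)
  qed
  finally show ?thesis unfolding d_def by simp
qed


lemma Qmat_eq: "Qmat W k $ i $ j = qq W k i (j::'n::finite)"
proof -
  have "{F. in_forest W F \<and> card F = k \<and> tree_root F i j} = {F\<in>Fs W k. rooted F i j}"
    unfolding Fs_def using in_forest_iff tree_root_iff by blast
  then have "Qmat W k $ i $ j = (\<Sum>F\<in>{F\<in>Fs W k. rooted F i j}. weight W F)"
    unfolding Qmat_def by simp
  also have "\<dots> = (\<Sum>F\<in>Fs W k. if rooted F i j then weight W F else 0)"
    by (rule sum.inter_filter) simp
  also have "\<dots> = qq W k i j" unfolding qq_def rr_def by (intro sum.cong) auto
  finally show ?thesis .
qed

lemma sigma_eq: "sigma W k = sig W (k::nat)"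
  unfolding sigma_def sig_def Fs_def by (simp only: in_forest_iff)

lemma Fs0:
  fixes W :: "real^'n^'n"
  shows "Fs W 0 = {{}}"
proof -
  have "forest W {}" unfolding forest_def func_def by (simp add: acyclic_def)
  moreover have "F = {}" if "F \<in> Fs W 0" for F :: "('n \<times> 'n) set"
    using that unfolding Fs_def by auto
  ultimately show ?thesis unfolding Fs_def by auto
qed

lemma Qmat0: "Qmat W 0 = mat 1"
proof -
  have "Qmat W 0 $ i $ j = mat 1 $ i $ j" for i j
  proof -
    have "rooted {} i j \<longleftrightarrow> i = j" unfolding rooted_def sink_def by auto
    then show ?thesis unfolding Qmat_eq qq_def Fs0 mat_def rr_def weight_def by simp
  qed
  then show ?thesis by (simp add: vec_eq_iff)
qed

lemma sigma0: "sigma W 0 = 1"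
  unfolding sigma_eq sig_def Fs0 weight_def by simp

lemma lap_sum:
  fixes W :: "real^'n^'n" and q :: "'n \<Rightarrow> real"
  shows "(\<Sum>m\<in>UNIV. laplacian W $ i $ m * q m) = (\<Sum>m\<in>UNIV. W$i$m * (q i - q m))"
proof -
  have "(\<Sum>m\<in>UNIV. laplacian W $ i $ m * q m)
      = laplacian W $ i $ i * q i + (\<Sum>m\<in>UNIV-{i}. laplacian W $ i $ m * q m)"
    by (rule sum.remove) auto
  also have "\<dots> = (\<Sum>m\<in>UNIV-{i}. W$i$m) * q i + (\<Sum>m\<in>UNIV-{i}. - W$i$m * q m)"
    unfolding laplacian_def by simp
  also have "\<dots> = (\<Sum>m\<in>UNIV-{i}. W$i$m * (q i - q m))"
  proof -
    have "(\<Sum>m\<in>UNIV-{i}. W$i$m * (q i - q m)) = (\<Sum>m\<in>UNIV-{i}. W$i$m * q i) - (\<Sum>m\<in>UNIV-{i}. W$i$m * q m)"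
      by (simp add: right_diff_distrib sum_subtractf)
    moreover have "(\<Sum>m\<in>UNIV-{i}. W$i$m) * q i = (\<Sum>m\<in>UNIV-{i}. W$i$m * q i)"
      by (simp add: sum_distrib_right)
    moreover have "(\<Sum>m\<in>UNIV-{i}. - W$i$m * q m) = - (\<Sum>m\<in>UNIV-{i}. W$i$m * q m)"
      by (simp add: sum_negf[symmetric])
    ultimately show ?thesis by simp
  qed
  also have "\<dots> = W$i$i * (q i - q i) + (\<Sum>m\<in>UNIV-{i}. W$i$m * (q i - q m))" by simp
  also have "\<dots> = (\<Sum>m\<in>UNIV. W$i$m * (q i - q m))"
    by (rule sum.remove[symmetric]) auto
  finally show ?thesis .
qed

lemma Qmat_Suc:
  fixes W :: "real^'n^'n"
  assumes Wnn: "\<forall>i j. W$i$j \<ge> 0"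
  shows "Qmat W (Suc k) = sigma W (Suc k) *\<^sub>R mat 1 + (- laplacian W) ** Qmat W k"
proof -
  have "Qmat W (Suc k) $ i $ j = (sigma W (Suc k) *\<^sub>R mat 1 + (- laplacian W) ** Qmat W k) $ i $ j" for i j
  proof -
    have "((- laplacian W) ** Qmat W k) $ i $ j = - (\<Sum>m\<in>UNIV. laplacian W $ i $ m * qq W k m j)"
      unfolding matrix_matrix_mult_def Qmat_eq by (simp add: sum_negf[symmetric])
    also have "\<dots> = - (\<Sum>m\<in>UNIV. W$i$m * (qq W k i j - qq W k m j))"
      by (simp only: lap_sum)
    finally have e: "((- laplacian W) ** Qmat W k) $ i $ j = - (\<Sum>m\<in>UNIV. W$i$m * (qq W k i j - qq W k m j))" .
    have m: "(sigma W (Suc k) *\<^sub>R mat 1 + (- laplacian W) ** Qmat W k) $ i $ j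
        = sigma W (Suc k) * (if i = j then 1 else 0) + ((- laplacian W) ** Qmat W k) $ i $ j"
      by (simp add: mat_def)
    show ?thesis using main_step[OF Wnn, of k i j] unfolding m e
      by (cases "i = j"; simp add: Qmat_eq sigma_eq; linarith)
  qed
  then show ?thesis by (simp add: vec_eq_iff)
qed

lemma matpow_Suc': "matpow A (Suc m) = A ** matpow A m"
proof (induction m)
  case 0 then show ?case by simp
next
  case (Suc m) then show ?case by (metis matpow.simps(2) matrix_mul_assoc)
qed

lemma mul_sum_scaleR:
  fixes A :: "real^'n^'n"
  shows "A ** (\<Sum>i\<in>I. c i *\<^sub>R B i) = (\<Sum>i\<in>I. c i *\<^sub>R (A ** B i))"
proof (induction I rule: infinite_finite_induct)
  case (infinite I) then show ?case by (simp add: vec_eq_iff matrix_matrix_mult_def)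
next
  case empty then show ?case by (simp add: vec_eq_iff matrix_matrix_mult_def)
next
  case (insert x F) then show ?case by (simp add: matrix_add_ldistrib matrix_scalar_ac scalar_matrix_assoc)
qed

theorem proposition6:
  fixes W :: "real^'n^'n" and k :: nat
  assumes "CARD('n) > 1"
    and "\<forall>i. W$i$i = 0"
    and "\<forall>i j. W$i$j \<ge> 0"
  shows "Qmat W k = (\<Sum>i\<le>k. sigma W (k - i) *\<^sub>R matpow (- laplacian W) i)"
proof (induction k)
  case 0 then show ?case by (simp add: Qmat0 sigma0)
next
  case (Suc k)
  have "(\<Sum>i\<le>Suc k. sigma W (Suc k - i) *\<^sub>R matpow (- laplacian W) i)
      = sigma W (Suc k) *\<^sub>R mat 1 + (\<Sum>i\<le>k. sigma W (k - i) *\<^sub>R matpow (- laplacian W) (Suc i))"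
    by (simp only: sum.atMost_Suc_shift diff_Suc_Suc diff_zero matpow.simps(1))
  also have "\<dots> = sigma W (Suc k) *\<^sub>R mat 1 + (- laplacian W) ** (\<Sum>i\<le>k. sigma W (k - i) *\<^sub>R matpow (- laplacian W) i)"
    by (simp only: mul_sum_scaleR matpow_Suc')
  also have "\<dots> = Qmat W (Suc k)"
    using Suc Qmat_Suc[OF assms(3)] by simp
  finally show ?case by simp
qed

end
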